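(* Let $\Sigma$ be a finite alphabet and $C:\Sigma^k\to\Sigma^n$ a $(q,\delta,1,s)$-relaxed locally decodable code whose relaxed decoder is nonadaptive of the following form: for each $i\in[k]$ there is a probability distribution $\mathcal{Q}_i$ over $q$-element subsets of $[n]$ and, for each $Q\in\mathrm{supp}(\mathcal{Q}_i)$, a function $f_{i,Q}:\Sigma^Q\to\Sigma\cup\{\bot\}$; on input $y\in\Sigma^n$ and $i$, the decoder samples $Q\sim\mathcal{Q}_i$ and outputs $f_{i,Q}(y|_Q)$. Fix any $r\in\bigl(0,\frac{\delta(|\Sigma|-1)}{q|\Sigma|}(1-s|\Sigma|^q)\bigr)$. Define the decoder $\mathsf{Dec}'$ which, given oracle access to $y\in\Sigma^n$ and $i\in[k]$, samples $Q\sim\mathcal{Q}_i$ and outputs $g_{i,Q}(y|_Q)$ (with $g_{i,Q}$ as defined in the context). Then $\mathsf{Dec}'$ makes at most $q$ queries, and $C$ is a $(q,r,\varepsilon)$-locally decodable code with respect to $\mathsf{Dec}'$, where $\varepsilon=s|\Sigma|^{q}\bigl(1-\frac{1}{|\Sigma|}\bigr)+\frac{rq}{\delta}$.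
   Context: $\Delta(x,y)$ denotes Hamming distance on $\Sigma^n$; for $S\subseteq[n]$, $x|_S$ is the restriction of $x$ to coordinates in $S$. $C$ is a $(q,\delta,c,s)$-RLDC if there is a $q$-query decoder with outputs in $\Sigma\cup\{\bot\}$ such that for all $b\in\Sigma^k$, $i\in[k]$, $y$ with $\Delta(y,C(b))\le\delta n$: $\Pr[\mathsf{Dec}^{C(b)}(i)=b_i]\ge c$ and $\Pr[\mathsf{Dec}^y(i)\notin\{b_i,\bot\}]\le s$; here $c=1$. $C$ is a $(q,r,\varepsilon)$-LDC with respect to a $q$-query decoder $\mathsf{Dec}'$ with outputs in $\Sigma$ if for all $b$, $i$, and $y$ with $\Delta(y,C(b))\le rn$, $\Pr[\mathsf{Dec}'^y(i)\ne b_i]\le\varepsilon$. Heavy/light coordinates: $p_i(j):=\Pr_{Q\sim\mathcal{Q}_i}[j\in Q]$, $H_i:=\{j\in[n]:p_i(j)>q/(\delta n)\}$, $L_i:=[n]\setminus H_i$, and $L(Q):=Q\cap L_i$. For a light pattern $a\in\Sigma^{L(Q)}$, call $a$ good if there is a unique $\sigma\in\Sigma$ such that some $z\in\Sigma^Q$ with $z|_{L(Q)}=a$ has $f_{i,Q}(z)=\sigma$ (i.e., among all completions $z$ of $a$, $f_{i,Q}$ takes at least one non-$\bot$ value and all its non-$\bot$ values equal $\sigma$); otherwise $a$ is bad (either two completions give two different non-$\bot$ values, or all completions give $\bot$). For $\ell\in\Sigma^Q$ with $a=\ell|_{L(Q)}$: if $a$ is good, $g_{i,Q}(\ell):=\sigma$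 for the associated $\sigma$; if $a$ is bad, $g_{i,Q}(\ell)$ is a fresh uniformly random symbol of $\Sigma$. *)

theory Defs
  imports "HOL-Probability.Probability"
begin

text \<open>Coordinates of [n] are {0..<n}; words in Sigma^m are extensional functions
  on {..<m}. The symbol bot is modelled by None in 'a option.\<close>

definition words :: "nat \<Rightarrow> (nat \<Rightarrow> 'a) set" where
  "words m = PiE {..<m} (\<lambda>_. UNIV)"

definition hdist :: "nat \<Rightarrow> (nat \<Rightarrow> 'a) \<Rightarrow> (nat \<Rightarrow> 'a) \<Rightarrow> nat" where
  "hdist n x y = card {j\<in>{..<n}. x j \<noteq> y j}"

definition rdec :: "(nat \<Rightarrow> nat set pmf) \<Rightarrow> (nat \<Rightarrow> nat set \<Rightarrow> (nat \<Rightarrow> 'a) \<Rightarrow> 'a option)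
    \<Rightarrow> (nat \<Rightarrow> 'a) \<Rightarrow> nat \<Rightarrow> 'a option pmf" where
  "rdec Qd f y i = map_pmf (\<lambda>Q. f i Q (restrict y Q)) (Qd i)"

definition is_RLDC :: "nat \<Rightarrow> nat \<Rightarrow> ((nat \<Rightarrow> 'a) \<Rightarrow> nat \<Rightarrow> 'a) \<Rightarrow> real \<Rightarrow> real \<Rightarrow> real
    \<Rightarrow> ((nat \<Rightarrow> 'a) \<Rightarrow> nat \<Rightarrow> 'a option pmf) \<Rightarrow> bool" where
  "is_RLDC k n C \<delta> c s Dec \<longleftrightarrow>
     (\<forall>b\<in>words k. \<forall>i<k. \<forall>y\<in>words n. real (hdist n y (C b)) \<le> \<delta> * real n \<longrightarrow>
        measure_pmf.prob (Dec (C b) i) {Some (b i)} \<ge> c \<and>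
        measure_pmf.prob (Dec y i) (- {Some (b i), None}) \<le> s)"

definition is_LDC :: "nat \<Rightarrow> nat \<Rightarrow> ((nat \<Rightarrow> 'a) \<Rightarrow> nat \<Rightarrow> 'a) \<Rightarrow> real \<Rightarrow> real
    \<Rightarrow> ((nat \<Rightarrow> 'a) \<Rightarrow> nat \<Rightarrow> 'a pmf) \<Rightarrow> bool" where
  "is_LDC k n C r \<epsilon> Dec' \<longleftrightarrow>
     (\<forall>b\<in>words k. \<forall>i<k. \<forall>y\<in>words n. real (hdist n y (C b)) \<le> r * real n \<longrightarrow>
        measure_pmf.prob (Dec' y i) {x. x \<noteq> b i} \<le> \<epsilon>)"

definition pq :: "(nat \<Rightarrow> nat set pmf) \<Rightarrow> nat \<Rightarrow> nat \<Rightarrow> real" where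
  "pq Qd i j = measure_pmf.prob (Qd i) {Q. j \<in> Q}"

definition heavy :: "nat \<Rightarrow> nat \<Rightarrow> real \<Rightarrow> (nat \<Rightarrow> nat set pmf) \<Rightarrow> nat \<Rightarrow> nat set" where
  "heavy n q \<delta> Qd i = {j\<in>{..<n}. pq Qd i j > real q / (\<delta> * real n)}"

definition light :: "nat \<Rightarrow> nat \<Rightarrow> real \<Rightarrow> (nat \<Rightarrow> nat set pmf) \<Rightarrow> nat \<Rightarrow> nat set" where
  "light n q \<delta> Qd i = {..<n} - heavy n q \<delta> Qd i"

definition completes_to :: "(nat \<Rightarrow> nat set \<Rightarrow> (nat \<Rightarrow> 'a) \<Rightarrow> 'a option) \<Rightarrow> nat \<Rightarrow> nat set
    \<Rightarrow> nat set \<Rightarrow> (nat \<Rightarrow> 'a) \<Rightarrow> 'a \<Rightarrow> bool" where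
  "completes_to f i Q LQ a \<sigma> \<longleftrightarrow>
     (\<exists>z\<in>PiE Q (\<lambda>_. UNIV). restrict z LQ = a \<and> f i Q z = Some \<sigma>)"

text \<open>g_{i,Q}(y|_Q) as a distribution: the associated sigma if the light pattern is good,
  otherwise a fresh uniformly random symbol.\<close>
definition gdec :: "nat \<Rightarrow> nat \<Rightarrow> real \<Rightarrow> (nat \<Rightarrow> nat set pmf)
    \<Rightarrow> (nat \<Rightarrow> nat set \<Rightarrow> (nat \<Rightarrow> 'a::finite) \<Rightarrow> 'a option) \<Rightarrow> nat \<Rightarrow> nat set \<Rightarrow> (nat \<Rightarrow> 'a) \<Rightarrow> 'a pmf" where
  "gdec n q \<delta> Qd f i Q y =
     (let LQ = Q \<inter> light n q \<delta> Qd i; a = restrict y LQ in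
      if (\<exists>!\<sigma>. completes_to f i Q LQ a \<sigma>)
      then return_pmf (THE \<sigma>. completes_to f i Q LQ a \<sigma>)
      else pmf_of_set UNIV)"

definition dec' :: "nat \<Rightarrow> nat \<Rightarrow> real \<Rightarrow> (nat \<Rightarrow> nat set pmf)
    \<Rightarrow> (nat \<Rightarrow> nat set \<Rightarrow> (nat \<Rightarrow> 'a::finite) \<Rightarrow> 'a option) \<Rightarrow> (nat \<Rightarrow> 'a) \<Rightarrow> nat \<Rightarrow> 'a pmf" where
  "dec' n q \<delta> Qd f y i = bind_pmf (Qd i) (\<lambda>Q. gdec n q \<delta> Qd f i Q y)"

end

theory Submission
  imports Defs
begin

lemma prob_as_sum:
  assumes "finite S" "set_pmf p \<subseteq> S"
  shows "measure_pmf.prob p A = (\<Sum>x\<in>S. pmf p x * indicator A x)"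
proof -
  have "measure_pmf.prob p A = measure_pmf.expectation p (indicator A)"
    by simp
  also have "\<dots> = (\<Sum>x\<in>S. indicator A x * pmf p x)"
    by (rule integral_measure_pmf_real) (use assms in auto)
  finally show ?thesis by (simp add: mult.commute)
qed

lemma prob_bind_sum:
  assumes "finite S" "set_pmf p \<subseteq> S" "\<And>x. x \<in> S \<Longrightarrow> finite (set_pmf (g x))"
  shows "measure_pmf.prob (bind_pmf p g) A = (\<Sum>x\<in>S. pmf p x * measure_pmf.prob (g x) A)"
proof -
  have "measure_pmf.prob (bind_pmf p g) A = measure_pmf.expectation (bind_pmf p g) (indicator A)"
    by simp
  also have "\<dots> = (\<Sum>x\<in>S. pmf p x *\<^sub>R measure_pmf.expectation (g x) (indicator A))"
    by (rule pmf_expectation_bind) (use assms in auto)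
  finally show ?thesis by simp
qed

lemma gdec_local:
  assumes "restrict y Q = restrict y' Q"
  shows "gdec n q \<delta> Qd f i Q y = gdec n q \<delta> Qd f i Q y'"
proof -
  have "restrict y (Q \<inter> light n q \<delta> Qd i) = restrict y' (Q \<inter> light n q \<delta> Qd i)"
    using assms unfolding restrict_def by (metis IntD1)
  then show ?thesis unfolding gdec_def Let_def by simp
qed

theorem mainTheorem2:
  fixes C :: "(nat \<Rightarrow> 'a::finite) \<Rightarrow> nat \<Rightarrow> 'a"
    and Qd :: "nat \<Rightarrow> nat set pmf"
    and f :: "nat \<Rightarrow> nat set \<Rightarrow> (nat \<Rightarrow> 'a) \<Rightarrow> 'a option"
    and k n q :: nat and \<delta> s r :: real
  assumes q_pos: "q \<ge> 1"
    and delta_pos: "0 < \<delta>"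
    and C_maps: "\<forall>b\<in>words k. C b \<in> words n"
    and Qd_supp: "\<forall>i<k. \<forall>Q\<in>set_pmf (Qd i). Q \<subseteq> {..<n} \<and> card Q = q"
    and rldc: "is_RLDC k n C \<delta> 1 s (rdec Qd f)"
    and r_pos: "0 < r"
    and r_lt: "r < \<delta> * (real CARD('a) - 1) / (real q * real CARD('a))
                   * (1 - s * real CARD('a) ^ q)"
  shows "(\<forall>i<k. \<forall>Q\<in>set_pmf (Qd i). card Q \<le> q \<and>
            (\<forall>y y'. restrict y Q = restrict y' Q \<longrightarrow>
                gdec n q \<delta> Qd f i Q y = gdec n q \<delta> Qd f i Q y'))
      \<and> is_LDC k n C r
          (s * real CARD('a) ^ q * (1 - 1 / real CARD('a)) + r * real q / \<delta>)
          (dec' n q \<delta> Qd f)"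
proof
  show "\<forall>i<k. \<forall>Q\<in>set_pmf (Qd i). card Q \<le> q \<and>
            (\<forall>y y'. restrict y Q = restrict y' Q \<longrightarrow>
                gdec n q \<delta> Qd f i Q y = gdec n q \<delta> Qd f i Q y')"
    using Qd_supp gdec_local by (metis order_refl)
next
  show "is_LDC k n C r
          (s * real CARD('a) ^ q * (1 - 1 / real CARD('a)) + r * real q / \<delta>)
          (dec' n q \<delta> Qd f)"
    unfolding is_LDC_def
  proof (intro ballI allI impI)
    fix b i y
    assume b: "b \<in> words k" and ik: "i < k" and y: "y \<in> words n"
      and dist: "real (hdist n y (C b)) \<le> r * real n"
    define x where "x = C b"
    define p where "p = Qd i"
    define S where "S = Pow {..<n}"
    define L where "L = light n q \<delta> Qd i"
    define H where "H = heavy n q \<delta> Qd i"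
    define E where "E = {j\<in>{..<n}. y j \<noteq> x j}"
    define c where "c = real CARD('a)"
    define bad where "bad = {Q. \<not> (\<exists>!\<sigma>. completes_to f i Q (Q \<inter> L) (restrict x (Q \<inter> L)) \<sigma>)}"
    define A where "A = {Q. Q \<inter> E \<inter> L \<noteq> {}}"
    have finS: "finite S" unfolding S_def by simp
    have sp: "set_pmf p \<subseteq> S" using Qd_supp ik unfolding S_def p_def by auto
    have suppQ: "Q \<subseteq> {..<n}" "card Q = q" if "Q \<in> set_pmf p" for Q
      using Qd_supp ik that unfolding p_def by auto
    have x: "x \<in> words n" using C_maps b x_def by auto
    have c1: "c \<ge> 1" unfolding c_def
      by (simp add: Suc_leI finite_UNIV_card_ge_0)
    have pq_sum: "pq Qd i j = (\<Sum>Q\<in>S. pmf p Q * indicator {Q. j \<in> Q} Q)" for j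
      unfolding pq_def p_def[symmetric] by (rule prob_as_sum[OF finS sp])
    have sum_w: "(\<Sum>Q\<in>S. pmf p Q) = 1"
      using prob_as_sum[OF finS sp, of UNIV] by simp
    have pq_nonneg: "pq Qd i j \<ge> 0" for j unfolding pq_def by simp
    have HL: "H \<subseteq> {..<n}" "L = {..<n} - H"
      unfolding H_def L_def light_def heavy_def by auto
    have corr: "f i Q (restrict x Q) = Some (b i)" if "Q \<in> set_pmf p" for Q
    proof -
      have "hdist n x x = 0" unfolding hdist_def by simp
      then have "measure_pmf.prob (rdec Qd f x i) {Some (b i)} \<ge> 1"
        using rldc b ik x delta_pos unfolding is_RLDC_def x_def by auto
      then have "measure_pmf.prob p {Q. f i Q (restrict x Q) = Some (b i)} = 1"
        unfolding rdec_def measure_map_pmf p_def[symmetric]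
        by (simp add: measure_pmf.measure_ge_1_iff vimage_def)
      then have "AE Q in p. Q \<in> {Q. f i Q (restrict x Q) = Some (b i)}"
        by (rule measure_pmf.AE_prob_1)
      then show ?thesis using that by (simp add: AE_measure_pmf_iff)
    qed
    have comp_bi: "completes_to f i Q (Q \<inter> L) (restrict x (Q \<inter> L)) (b i)"
      if "Q \<in> set_pmf p" for Q
      unfolding completes_to_def
    proof (rule bexI[of _ "restrict x Q"])
      show "restrict (restrict x Q) (Q \<inter> L) = restrict x (Q \<inter> L) \<and> f i Q (restrict x Q) = Some (b i)"
        using corr[OF that] by (auto simp: fun_eq_iff)
    qed simp
    have sumpq: "(\<Sum>j<n. pq Qd i j) = real q"
    proof -
      have "(\<Sum>j<n. pq Qd i j) = (\<Sum>j<n. \<Sum>Q\<in>S. pmf p Q * indicator {Q. j \<in> Q} Q)"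
        using pq_sum by simp
      also have "\<dots> = (\<Sum>Q\<in>S. pmf p Q * (\<Sum>j<n. indicator Q j))"
        by (subst sum.swap) (simp add: sum_distrib_left indicator_def mult.commute)
      also have "\<dots> = (\<Sum>Q\<in>S. pmf p Q * real q)"
      proof (rule sum.cong[OF refl])
        fix Q assume "Q \<in> S"
        show "pmf p Q * (\<Sum>j<n. indicator Q j) = pmf p Q * real q"
        proof (cases "Q \<in> set_pmf p")
          case True
          have "(\<Sum>j<n. indicator Q j) = real (card ({..<n} \<inter> Q))"
            by (simp add: indicator_def sum.If_cases)
          also have "{..<n} \<inter> Q = Q" using suppQ[OF True] by auto
          finally show ?thesis using suppQ[OF True] by simp
        next
          case False
          then show ?thesis by (simp add: set_pmf_iff)
        qed
      qed
      also have "\<dots> = real q" using sum_w by (simp add: sum_distrib_right[symmetric])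
      finally show ?thesis .
    qed
    have cardH: "real (card H) \<le> \<delta> * real n"
    proof (cases "H = {}")
      case True
      then show ?thesis using delta_pos by simp
    next
      case False
      then have n0: "n > 0" using HL by auto
      have "real (card H) * (real q / (\<delta> * real n)) \<le> (\<Sum>j\<in>H. pq Qd i j)"
        by (rule sum_bounded_below) (auto simp: H_def heavy_def less_imp_le)
      also have "\<dots> \<le> (\<Sum>j<n. pq Qd i j)"
        by (rule sum_mono2) (use HL pq_nonneg in auto)
      finally have "real (card H) * (real q / (\<delta> * real n)) \<le> real q" using sumpq by simp
      then show ?thesis using q_pos delta_pos n0 by (simp add: field_simps)
    qed
    have errQ: "measure_pmf.prob (gdec n q \<delta> Qd f i Q y) {z. z \<noteq> b i}
        \<le> indicator A Q + (1 - 1 / c) * indicator bad Q" if Qp: "Q \<in> set_pmf p" for Q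
    proof (cases "Q \<in> A")
      case True
      have "measure_pmf.prob (gdec n q \<delta> Qd f i Q y) {z. z \<noteq> b i} \<le> 1"
        by (rule measure_pmf.prob_le_1)
      also have "1 \<le> indicator A Q + (1 - 1 / c) * indicator bad Q"
        using True c1 by simp
      finally show ?thesis .
    next
      case False
      then have QEL: "Q \<inter> E \<inter> L = {}" unfolding A_def by simp
      have eqr: "restrict y (Q \<inter> L) = restrict x (Q \<inter> L)"
      proof
        fix j show "restrict y (Q \<inter> L) j = restrict x (Q \<inter> L) j"
          using QEL suppQ(1)[OF Qp] unfolding E_def by (auto simp: restrict_def)
      qed
      have g: "gdec n q \<delta> Qd f i Q y = gdec n q \<delta> Qd f i Q x"
        unfolding gdec_def Let_def L_def[symmetric] using eqr by simp
      show ?thesis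
      proof (cases "Q \<in> bad")
        case True
        then have "gdec n q \<delta> Qd f i Q x = pmf_of_set UNIV"
          unfolding gdec_def Let_def L_def[symmetric] bad_def by simp
        then have "measure_pmf.prob (gdec n q \<delta> Qd f i Q y) {z. z \<noteq> b i}
            = real (card (UNIV \<inter> {z. z \<noteq> b i})) / c"
          using g by (simp add: measure_pmf_of_set c_def)
        also have "card (UNIV \<inter> {z. z \<noteq> b i}) = CARD('a) - 1"
        proof -
          have "UNIV \<inter> {z. z \<noteq> b i} = UNIV - {b i}" by auto
          then show ?thesis by (simp add: card_Diff_singleton)
        qed
        also have "real (CARD('a) - 1) / c = 1 - 1 / c"
          using c1 unfolding c_def by (simp add: of_nat_diff finite_UNIV_card_ge_0 Suc_leI field_simps)
        finally show ?thesis using True False by simp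
      next
        case nb: False
        then have ex1: "\<exists>!\<sigma>. completes_to f i Q (Q \<inter> L) (restrict x (Q \<inter> L)) \<sigma>"
          unfolding bad_def by simp
        have "(THE \<sigma>. completes_to f i Q (Q \<inter> L) (restrict x (Q \<inter> L)) \<sigma>) = b i"
          by (rule the1_equality[OF ex1 comp_bi[OF Qp]])
        then have "gdec n q \<delta> Qd f i Q x = return_pmf (b i)"
          using ex1 unfolding gdec_def Let_def L_def[symmetric] by simp
        then have "measure_pmf.prob (gdec n q \<delta> Qd f i Q y) {z. z \<noteq> b i} = 0"
          using g by simp
        then show ?thesis using c1 by simp
      qed
    qed
    have boundA: "(\<Sum>Q\<in>S. pmf p Q * indicator A Q) \<le> r * real q / \<delta>"
    proof (cases "E \<inter> L = {}")
      case True
      then have "A = {}" unfolding A_def by auto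
      then show ?thesis using r_pos delta_pos by simp
    next
      case False
      then have n0: "n > 0" unfolding E_def by auto
      have finEL: "finite (E \<inter> L)" unfolding E_def by simp
      have "(\<Sum>Q\<in>S. pmf p Q * indicator A Q)
          \<le> (\<Sum>Q\<in>S. pmf p Q * (\<Sum>j\<in>E \<inter> L. indicator {Q. j \<in> Q} Q))"
      proof (rule sum_mono, rule mult_left_mono)
        fix Q assume "Q \<in> S"
        show "indicator A Q \<le> (\<Sum>j\<in>E \<inter> L. indicator {Q. j \<in> Q} Q :: real)"
        proof (cases "Q \<in> A")
          case True
          then obtain j where j: "j \<in> Q" "j \<in> E \<inter> L" unfolding A_def by auto
          have "(indicator {Q. j \<in> Q} Q :: real) \<le> (\<Sum>j\<in>E \<inter> L. indicator {Q. j \<in> Q} Q)"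
            by (rule member_le_sum[OF j(2)]) (auto simp: finEL)
          then show ?thesis using True j by simp
        next
          case False
          then show ?thesis by (simp add: sum_nonneg)
        qed
      qed simp
      also have "\<dots> = (\<Sum>j\<in>E \<inter> L. pq Qd i j)"
        unfolding pq_sum by (subst sum.swap) (simp add: sum_distrib_left)
      also have "\<dots> \<le> (\<Sum>j\<in>E \<inter> L. real q / (\<delta> * real n))"
        by (rule sum_mono) (auto simp: L_def light_def heavy_def)
      also have "\<dots> = real (card (E \<inter> L)) * (real q / (\<delta> * real n))" by simp
      also have "\<dots> \<le> real (card E) * (real q / (\<delta> * real n))"
        by (rule mult_right_mono) (auto simp: card_mono E_def less_imp_le[OF delta_pos])
      also have "\<dots> \<le> (r * real n) * (real q / (\<delta> * real n))"
        apply (rule mult_right_mono)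
        using dist unfolding hdist_def E_def x_def using delta_pos by auto
      also have "\<dots> = r * real q / \<delta>" using n0 delta_pos by (simp add: field_simps)
      finally show ?thesis .
    qed
    have boundBad: "(\<Sum>Q\<in>S. pmf p Q * indicator bad Q) \<le> s * c ^ q"
    proof -
      define D where "D = PiE H (\<lambda>_. UNIV :: 'a set)"
      define wh where "wh h = (\<lambda>j. if j \<in> H then h j else x j)" for h :: "nat \<Rightarrow> 'a"
      define B where "B h = {Q. f i Q (restrict (wh h) Q) \<notin> {Some (b i), None}}" for h
      define cnt where "cnt Q = card (D \<inter> {h. Q \<in> B h})" for Q
      have finH: "finite H" using HL finite_subset by blast
      have finD: "finite D" unfolding D_def using finH by (simp add: finite_PiE)
      have cardD: "real (card D) = c ^ card H"
        unfolding D_def c_def using finH by (simp add: card_PiE)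
      have whw: "wh h \<in> words n" if "h \<in> D" for h
        using x that HL(1) unfolding words_def wh_def D_def by (auto simp: PiE_iff extensional_def)
      have whd: "real (hdist n (wh h) (C b)) \<le> \<delta> * real n" for h
      proof -
        have "{j\<in>{..<n}. wh h j \<noteq> C b j} \<subseteq> H" unfolding wh_def x_def by auto
        then have "hdist n (wh h) (C b) \<le> card H" unfolding hdist_def
          by (rule card_mono[OF finH])
        then show ?thesis using cardH by linarith
      qed
      have sB: "(\<Sum>Q\<in>S. pmf p Q * indicator (B h) Q) \<le> s" if "h \<in> D" for h
      proof -
        have "measure_pmf.prob (rdec Qd f (wh h) i) (- {Some (b i), None}) \<le> s"
          using rldc b ik whw[OF that] whd unfolding is_RLDC_def by blast
        moreover have "measure_pmf.prob (rdec Qd f (wh h) i) (- {Some (b i), None})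
            = measure_pmf.prob p (B h)"
          unfolding rdec_def measure_map_pmf p_def[symmetric]
          by (rule arg_cong[where f="measure_pmf.prob p"]) (auto simp: B_def)
        ultimately show ?thesis using prob_as_sum[OF finS sp, of "B h"] by simp
      qed
      have "(\<Sum>Q\<in>S. pmf p Q * real (cnt Q)) = (\<Sum>h\<in>D. \<Sum>Q\<in>S. pmf p Q * indicator (B h) Q)"
      proof -
        have "real (cnt Q) = (\<Sum>h\<in>D. indicator (B h) Q)" for Q
          unfolding cnt_def using finD by (simp add: indicator_def sum.If_cases)
        then show ?thesis by (subst sum.swap) (simp add: sum_distrib_left)
      qed
      also have "\<dots> \<le> real (card D) * s"
        using sum_bounded_above[of D "\<lambda>h. \<Sum>Q\<in>S. pmf p Q * indicator (B h) Q" s] sB by simp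
      finally have sumcnt: "(\<Sum>Q\<in>S. pmf p Q * real (cnt Q)) \<le> c ^ card H * s"
        using cardD by simp
      have lower: "c ^ card H \<le> real (cnt Q) * c ^ q" if Qp: "Q \<in> set_pmf p" and Qb: "Q \<in> bad" for Q
      proof -
        have "\<exists>\<sigma>'. \<sigma>' \<noteq> b i \<and> completes_to f i Q (Q \<inter> L) (restrict x (Q \<inter> L)) \<sigma>'"
        proof (rule ccontr)
          assume neg: "\<not> (\<exists>\<sigma>'. \<sigma>' \<noteq> b i \<and> completes_to f i Q (Q \<inter> L) (restrict x (Q \<inter> L)) \<sigma>')"
          have "\<exists>!\<sigma>. completes_to f i Q (Q \<inter> L) (restrict x (Q \<inter> L)) \<sigma>"
          proof (rule ex1I[of _ "b i"])
            show "completes_to f i Q (Q \<inter> L) (restrict x (Q \<inter> L)) (b i)" by (rule comp_bi[OF Qp])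
          next
            fix \<sigma> assume "completes_to f i Q (Q \<inter> L) (restrict x (Q \<inter> L)) \<sigma>"
            then show "\<sigma> = b i" using neg by blast
          qed
          then show False using Qb unfolding bad_def by simp
        qed
        then obtain \<sigma>' z where sz: "\<sigma>' \<noteq> b i" "z \<in> PiE Q (\<lambda>_. UNIV)"
          "restrict z (Q \<inter> L) = restrict x (Q \<inter> L)" "f i Q z = Some \<sigma>'"
          unfolding completes_to_def by blast
        have Qn: "Q \<subseteq> {..<n}" using suppQ[OF Qp] by simp
        have finQ: "finite Q" using Qn finite_subset by blast
        define \<phi> where "\<phi> g = (\<lambda>j. if j \<in> H \<inter> Q then z j else if j \<in> H then g j else undefined)"
          for g :: "nat \<Rightarrow> 'a"
        have inj: "inj_on \<phi> (PiE (H - Q) (\<lambda>_. UNIV))"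
        proof (rule inj_onI)
          fix g1 g2 assume g: "g1 \<in> PiE (H - Q) (\<lambda>_. UNIV)" "g2 \<in> PiE (H - Q) (\<lambda>_. UNIV)"
            and e: "\<phi> g1 = \<phi> g2"
          show "g1 = g2"
          proof
            fix j show "g1 j = g2 j"
            proof (cases "j \<in> H - Q")
              case True
              then show ?thesis using fun_cong[OF e, of j] unfolding \<phi>_def by auto
            next
              case False
              then show ?thesis using PiE_arb[OF g(1) False] PiE_arb[OF g(2) False] by simp
            qed
          qed
        qed
        have img: "\<phi> ` PiE (H - Q) (\<lambda>_. UNIV) \<subseteq> D \<inter> {h. Q \<in> B h}"
        proof
          fix h assume "h \<in> \<phi> ` PiE (H - Q) (\<lambda>_. UNIV)"
          then obtain g where hg: "h = \<phi> g" by blast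
          have hD: "h \<in> D" unfolding D_def hg \<phi>_def by (auto simp: PiE_iff extensional_def)
          have "restrict (wh h) Q = z"
          proof
            fix j show "restrict (wh h) Q j = z j"
            proof (cases "j \<in> Q")
              case True
              show ?thesis
              proof (cases "j \<in> H")
                case True
                then show ?thesis using \<open>j \<in> Q\<close> unfolding hg wh_def \<phi>_def by simp
              next
                case False
                then have "j \<in> Q \<inter> L" using \<open>j \<in> Q\<close> Qn HL(2) by auto
                then have "x j = z j" using fun_cong[OF sz(3), of j] by simp
                then show ?thesis using False \<open>j \<in> Q\<close> unfolding hg wh_def \<phi>_def by simp
              qed
            next
              case False
              then show ?thesis using PiE_arb[OF sz(2) False] by simp
            qed
          qed
          then have "Q \<in> B h" unfolding B_def using sz(1,4) by simp
          then show "h \<in> D \<inter> {h. Q \<in> B h}" using hD by simp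
        qed
        have "card (PiE (H - Q) (\<lambda>_. UNIV :: 'a set)) \<le> cnt Q"
          unfolding cnt_def by (rule card_inj_on_le[OF inj img]) (use finD in simp)
        moreover have "real (card (PiE (H - Q) (\<lambda>_. UNIV :: 'a set))) = c ^ card (H - Q)"
          unfolding c_def using finH by (simp add: card_PiE)
        ultimately have le1: "c ^ card (H - Q) \<le> real (cnt Q)" by (metis of_nat_le_iff)
        have "card H = card (H - Q) + card (H \<inter> Q)"
          using finH by (metis add.commute card_Int_Diff)
        moreover have "card (H \<inter> Q) \<le> q"
          using card_mono[OF finQ, of "H \<inter> Q"] suppQ(2)[OF Qp] by auto
        ultimately have "c ^ card H = c ^ card (H - Q) * c ^ card (H \<inter> Q)"
          by (simp add: power_add)
        also have "\<dots> \<le> real (cnt Q) * c ^ q"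
          apply (rule mult_mono[OF le1])
          using c1 \<open>card (H \<inter> Q) \<le> q\<close> by (auto intro: power_increasing)
        finally show ?thesis .
      qed
      have "(\<Sum>Q\<in>S. pmf p Q * indicator bad Q) * c ^ card H
          \<le> (\<Sum>Q\<in>S. pmf p Q * real (cnt Q)) * c ^ q"
        unfolding sum_distrib_right
      proof (rule sum_mono)
        fix Q assume "Q \<in> S"
        show "pmf p Q * indicator bad Q * c ^ card H \<le> pmf p Q * real (cnt Q) * c ^ q"
        proof (cases "Q \<in> set_pmf p \<and> Q \<in> bad")
          case True
          then show ?thesis using lower[of Q] by (simp add: mult.assoc mult_left_mono)
        next
          case False
          then show ?thesis using c1
            by (auto simp: set_pmf_iff indicator_def)
        qed
      qed
      also have "\<dots> \<le> (c ^ card H * s) * c ^ q"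
        by (rule mult_right_mono[OF sumcnt]) (use c1 in simp)
      finally have "(\<Sum>Q\<in>S. pmf p Q * indicator bad Q) * c ^ card H \<le> (s * c ^ q) * c ^ card H"
        by (simp add: algebra_simps)
      moreover have "c ^ card H > 0" using c1 by simp
      ultimately show ?thesis by simp
    qed
    have "measure_pmf.prob (dec' n q \<delta> Qd f y i) {z. z \<noteq> b i}
        = (\<Sum>Q\<in>S. pmf p Q * measure_pmf.prob (gdec n q \<delta> Qd f i Q y) {z. z \<noteq> b i})"
      unfolding dec'_def p_def[symmetric] by (rule prob_bind_sum[OF finS sp]) simp
    also have "\<dots> \<le> (\<Sum>Q\<in>S. pmf p Q * (indicator A Q + (1 - 1 / c) * indicator bad Q))"
    proof (rule sum_mono)
      fix Q assume "Q \<in> S"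
      show "pmf p Q * measure_pmf.prob (gdec n q \<delta> Qd f i Q y) {z. z \<noteq> b i}
          \<le> pmf p Q * (indicator A Q + (1 - 1 / c) * indicator bad Q)"
      proof (cases "Q \<in> set_pmf p")
        case True
        then show ?thesis using errQ[OF True] by (simp add: mult_left_mono)
      next
        case False
        then show ?thesis by (simp add: set_pmf_iff)
      qed
    qed
    also have "\<dots> = (\<Sum>Q\<in>S. pmf p Q * indicator A Q) + (1 - 1 / c) * (\<Sum>Q\<in>S. pmf p Q * indicator bad Q)"
      by (simp only: distrib_left sum.distrib sum_distrib_left mult.left_commute)
    also have "\<dots> \<le> r * real q / \<delta> + (1 - 1 / c) * (s * c ^ q)"
      apply (rule add_mono[OF boundA])
      apply (rule mult_left_mono[OF boundBad])
      using c1 by simp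
    finally show "measure_pmf.prob (dec' n q \<delta> Qd f y i) {z. z \<noteq> b i}
        \<le> s * real CARD('a) ^ q * (1 - 1 / real CARD('a)) + r * real q / \<delta>"
      unfolding c_def by (simp add: algebra_simps)
  qed
qed

end
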